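(* Let $a\in\mathbb{R}^n$, $d\in\mathbb{R}^m$ with $\|a\|\ge\|d\|$. Let $(\bar x,\bar y)\in\mathbb{R}^{n+m}$ satisfy $\|\bar x\|>\|\bar y\|$ and $a^\mathsf{T}\bar x+d^\mathsf{T}\bar y\le0$, let $\lambda=\bar x/\|\bar x\|$, and let $\phi_\lambda(y)=\max_x\{\lambda^\mathsf{T} x:\|x\|\le\|y\|,\ a^\mathsf{T} x+d^\mathsf{T} y\le0\}$ for $y\in\mathbb{R}^m$. Let $L=\{(x,y):\lambda^\mathsf{T} x=0,\ y=0\}$, so that $L^\perp=\langle\lambda\rangle\times\mathbb{R}^m$ is identified with $\mathbb{R}\times\mathbb{R}^m$ via $(t\lambda,y)\leftrightarrow(t,y)$. Then the orthogonal projection of $(\bar x,\bar y)$ onto $L^\perp$, namely $(\lambda^\mathsf{T}\bar x,\bar y)$, lies in the interior of the epigraph $\{(t,y)\in\mathbb{R}\times\mathbb{R}^m:\phi_\lambda(y)\le t\}$.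
   Context: $\|\cdot\|$ is the Euclidean norm. *)

theory Defs
  imports "HOL-Analysis.Analysis"
begin

text \<open>Under the standing hypothesis norm a >= norm d the feasible set is nonempty and
  compact, so the supremum is attained and equals the maximum.\<close>
definition phi :: "real ^ 'n \<Rightarrow> real ^ 'm \<Rightarrow> real ^ 'n \<Rightarrow> real ^ 'm \<Rightarrow> real" where
  "phi a d lam y = Sup {lam \<bullet> x | x. norm x \<le> norm y \<and> a \<bullet> x + d \<bullet> y \<le> 0}"

end

theory Submission
  imports Defs
begin

lemma phi_le:
  fixes a :: "real ^ 'n" and d y :: "real ^ 'm" and lam :: "real ^ 'n"
  assumes "norm a \<ge> norm d" "norm lam = 1"
  shows "phi a d lam y \<le> norm y"
proof -
  let ?S = "{lam \<bullet> x | x. norm x \<le> norm y \<and> a \<bullet> x + d \<bullet> y \<le> 0}"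
  define x0 where "x0 = - (norm y / norm a) *\<^sub>R a"
  have "norm x0 \<le> norm y"
    by (cases "a = 0") (auto simp: x0_def)
  moreover have "a \<bullet> x0 + d \<bullet> y \<le> 0"
  proof (cases "a = 0")
    case True then show ?thesis using assms(1) by (simp add: x0_def)
  next
    case False
    have "a \<bullet> x0 = - norm y * norm a"
      using False by (simp add: x0_def inner_commute power2_norm_eq_inner[symmetric] power2_eq_square)
    moreover have "d \<bullet> y \<le> norm d * norm y" by (metis Cauchy_Schwarz_ineq2 abs_le_D1)
    moreover have "norm d * norm y \<le> norm a * norm y" using assms(1) by (simp add: mult_right_mono)
    ultimately show ?thesis by (simp add: algebra_simps)
  qed
  ultimately have ne: "?S \<noteq> {}" by blast
  have "\<And>s. s \<in> ?S \<Longrightarrow> s \<le> norm y"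
  proof -
    fix s assume "s \<in> ?S"
    then obtain x where "s = lam \<bullet> x" "norm x \<le> norm y" by blast
    moreover have "lam \<bullet> x \<le> norm lam * norm x" by (metis Cauchy_Schwarz_ineq2 abs_le_D1)
    ultimately show "s \<le> norm y" using assms(2) by simp
  qed
  then show ?thesis unfolding phi_def using ne by (intro cSup_least) auto
qed

theorem lemma1:
  fixes a xbar :: "real ^ 'n" and d ybar :: "real ^ 'm"
  assumes "norm a \<ge> norm d"
    and "norm xbar > norm ybar"
    and "a \<bullet> xbar + d \<bullet> ybar \<le> 0"
  shows "(let lam = xbar /\<^sub>R norm xbar in
           (lam \<bullet> xbar, ybar) \<in> interior {p :: real \<times> (real ^ 'm). phi a d lam (snd p) \<le> fst p})"
proof -
  define lam where "lam = xbar /\<^sub>R norm xbar"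
  have nz: "xbar \<noteq> 0" using assms(2) norm_ge_zero[of ybar] by auto
  have nl: "norm lam = 1" using nz by (simp add: lam_def)
  have lx: "lam \<bullet> xbar = norm xbar"
    using nz by (simp add: lam_def power2_norm_eq_inner[symmetric] power2_eq_square)
  let ?U = "{p :: real \<times> (real ^ 'm). norm (snd p) < fst p}"
  have op: "open ?U"
    by (intro open_Collect_less continuous_intros)
  have sub: "?U \<subseteq> {p :: real \<times> (real ^ 'm). phi a d lam (snd p) \<le> fst p}"
    using phi_le[OF assms(1) nl] by (auto intro: order_trans less_imp_le)
  have "(lam \<bullet> xbar, ybar) \<in> ?U" using lx assms(2) by simp
  then have "(lam \<bullet> xbar, ybar) \<in> interior {p :: real \<times> (real ^ 'm). phi a d lam (snd p) \<le> fst p}"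
    using interior_maximal[OF sub op] by blast
  then show ?thesis by (simp add: lam_def Let_def)
qed

end
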